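(* Let $p,q\in[1,\infty]$, let $v=\{v_i\}_{i\in\mathbb Z}$ and $w=\{w_i\}_{i\in\mathbb Z}$ be positive sequences, let $\varphi$ be a non-degenerate quasi-concave function on $(0,\infty)$ and let $\{t_k\}_{k\in\mathbb Z}$ be a discretizing sequence for $\varphi$. Then $$\left(l_q(v),l_q(w)\right)_{\varphi,p}=l_p\Big(l_q^{M_k}\Big(\frac{v_i}{\varphi(v_i/w_i)}\Big)\Big),$$ where $M_k=\{i\in\mathbb Z:\ t_{k-1}<v_i/w_i\le t_k\}$.
   Context: A function $\varphi:(0,\infty)\to(0,\infty)$ is non-degenerate quasi-concave if $\varphi$ is non-decreasing, $\varphi(t)/t$ is non-increasing, and $\lim_{t\to0+}\varphi(t)=\lim_{t\to\infty}\varphi(t)/t=\lim_{t\to0+}t/\varphi(t)=\lim_{t\to\infty}1/\varphi(t)=0$. A positive sequence $\{a_k\}_{k\in\mathbb Z}$ is strongly increasing if $\inf_k a_{k+1}/a_k\ge2$, strongly decreasing if $\sup_k a_{k+1}/a_k\le1/2$. A strongly increasing $\{t_k\}_{k\in\mathbb Z}$ is a discretizing sequence for $\varphi$ if $\{\varphi(t_k)\}$ is strongly increasing, $\{\varphi(t_k)/t_k\}$ is strongly decreasing, and there is a partition $\mathbb Z=\mathbb Z_1\sqcup\mathbb Z_2$ with $\varphi(t_{k+1})\le2\varphi(t_k)$ for $k\in\mathbb Z_1$ and $\varphi(t_k)/t_k\le2\varphi(t_{k+1})/t_{k+1}$ for $k\in\mathbb Z_2$. For a Banach couple $\overline X=(X_0,X_1)$,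 $K(t,x;\overline X)=\inf_{x=x_0+x_1}(\|x_0\|_{X_0}+t\|x_1\|_{X_1})$, and $\overline X_{\varphi,p}=(X_0,X_1)_{\varphi,p}$ is the space of $x\in X_0+X_1$ with $\big(\sum_{k\in\mathbb Z}(K(t_k,x;\overline X)/\varphi(t_k))^p\big)^{1/p}<\infty$ (sup if $p=\infty$). For a sequence space $E$ and positive weight $u$, $E(u)$ is the space of sequences $a$ with $\{a_iu_i\}\in E$, normed by $\|\{a_iu_i\}\|_E$; thus $l_q(v)$ consists of $\{a_i\}$ with $\{a_iv_i\}\in l_q$. For sets $M_k\subset\mathbb Z$, $l_p(l_q^{M_k})$ is the space of $\{a_i\}$ with norm $\big(\sum_{k}(\sum_{i\in M_k}|a_i|^q)^{p/q}\big)^{1/p}$ (usual modification if $p$ or $q$ is $\infty$). Equality of spaces means equal sets with equivalent norms. *)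

theory Defs
  imports "HOL-Analysis.Analysis" "HOL-Library.Function_Algebras"
begin

definition nondeg_quasi_concave :: "(real \<Rightarrow> real) \<Rightarrow> bool" where
  "nondeg_quasi_concave \<phi> \<longleftrightarrow>
     (\<forall>t>0. \<phi> t > 0) \<and>
     (\<forall>s t. 0 < s \<longrightarrow> s \<le> t \<longrightarrow> \<phi> s \<le> \<phi> t) \<and>
     (\<forall>s t. 0 < s \<longrightarrow> s \<le> t \<longrightarrow> \<phi> t / t \<le> \<phi> s / s) \<and>
     (\<phi> \<longlongrightarrow> 0) (at_right 0) \<and>
     ((\<lambda>t. \<phi> t / t) \<longlongrightarrow> 0) at_top \<and>
     ((\<lambda>t. t / \<phi> t) \<longlongrightarrow> 0) (at_right 0) \<and>
     ((\<lambda>t. 1 / \<phi> t) \<longlongrightarrow> 0) at_top"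

text \<open>A positive sequence is strongly increasing if \<open>inf_k a_{k+1}/a_k \<ge> 2\<close>,
  strongly decreasing if \<open>sup_k a_{k+1}/a_k \<le> 1/2\<close>; stated pointwise (inf/sup bounds are equivalent to pointwise bounds, and this avoids Sup of possibly unbounded real sets).\<close>

definition strongly_increasing :: "(int \<Rightarrow> real) \<Rightarrow> bool" where
  "strongly_increasing a \<longleftrightarrow> (\<forall>k. a k > 0) \<and> (\<forall>k. a (k + 1) / a k \<ge> 2)"

definition strongly_decreasing :: "(int \<Rightarrow> real) \<Rightarrow> bool" where
  "strongly_decreasing a \<longleftrightarrow> (\<forall>k. a k > 0) \<and> (\<forall>k. a (k + 1) / a k \<le> 1 / 2)"

definition discretizing_sequence :: "(real \<Rightarrow> real) \<Rightarrow> (int \<Rightarrow> real) \<Rightarrow> bool" where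
  "discretizing_sequence \<phi> t \<longleftrightarrow>
     strongly_increasing t \<and>
     strongly_increasing (\<lambda>k. \<phi> (t k)) \<and>
     strongly_decreasing (\<lambda>k. \<phi> (t k) / t k) \<and>
     (\<exists>Z1 Z2. Z1 \<inter> Z2 = {} \<and> Z1 \<union> Z2 = UNIV \<and>
        (\<forall>k\<in>Z1. \<phi> (t (k + 1)) \<le> 2 * \<phi> (t k)) \<and>
        (\<forall>k\<in>Z2. \<phi> (t k) / t k \<le> 2 * (\<phi> (t (k + 1)) / t (k + 1))))"

definition enn_powr :: "ennreal \<Rightarrow> real \<Rightarrow> ennreal" where
  "enn_powr a r = (if a = \<infinity> then \<infinity> else ennreal (enn2real a powr r))"

definition lnorm :: "ennreal \<Rightarrow> ('i \<Rightarrow> ennreal) \<Rightarrow> ennreal" where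
  "lnorm p a = (if p = \<infinity> then (SUP i. a i)
                else enn_powr (\<Sum>\<^sub>\<infinity>i. enn_powr (a i) (enn2real p)) (1 / enn2real p))"

definition lq_weighted_norm :: "ennreal \<Rightarrow> (int \<Rightarrow> real) \<Rightarrow> (int \<Rightarrow> real) \<Rightarrow> ennreal" where
  "lq_weighted_norm q u a = lnorm q (\<lambda>i. ennreal \<bar>a i * u i\<bar>)"

definition lp_lq_blocks_weighted_norm ::
  "ennreal \<Rightarrow> ennreal \<Rightarrow> (int \<Rightarrow> int set) \<Rightarrow> (int \<Rightarrow> real) \<Rightarrow> (int \<Rightarrow> real) \<Rightarrow> ennreal" where
  "lp_lq_blocks_weighted_norm p q M u a =
     lnorm p (\<lambda>k. lnorm q (\<lambda>i. if i \<in> M k then ennreal \<bar>a i * u i\<bar> else 0))"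

definition Kfun :: "('a::plus \<Rightarrow> ennreal) \<Rightarrow> ('a \<Rightarrow> ennreal) \<Rightarrow> real \<Rightarrow> 'a \<Rightarrow> ennreal" where
  "Kfun N0 N1 t x = (INF y \<in> {(x0, x1). x = x0 + x1}. N0 (fst y) + ennreal t * N1 (snd y))"

definition interp_norm ::
  "('a::plus \<Rightarrow> ennreal) \<Rightarrow> ('a \<Rightarrow> ennreal) \<Rightarrow> (real \<Rightarrow> real) \<Rightarrow> (int \<Rightarrow> real) \<Rightarrow> ennreal \<Rightarrow> 'a \<Rightarrow> ennreal" where
  "interp_norm N0 N1 \<phi> t p x = lnorm p (\<lambda>k. Kfun N0 N1 (t k) x / ennreal (\<phi> (t k)))"

text \<open>Equality of spaces with equivalent norms (norm \<open>\<infinity>\<close> means: not in the space).\<close>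
definition equiv_spaces :: "('a \<Rightarrow> ennreal) \<Rightarrow> ('a \<Rightarrow> ennreal) \<Rightarrow> bool" where
  "equiv_spaces N1 N2 \<longleftrightarrow>
     (\<exists>C>0. \<forall>x. N1 x \<le> ennreal C * N2 x \<and> N2 x \<le> ennreal C * N1 x)"

end

theory Submission
  imports Defs
begin


lemma P_inf[simp]: "enn_powr top r = top" by (simp add: enn_powr_def)
lemma P_ennreal[simp]: "0 \<le> c \<Longrightarrow> enn_powr (ennreal c) r = ennreal (c powr r)"
  by (simp add: enn_powr_def)
lemma P_0[simp]: "enn_powr 0 r = 0" by (simp add: enn_powr_def)

lemma P_cases: obtains "a = \<infinity>" | c where "c \<ge> 0" "a = ennreal c"
  by (metis ennreal_cases infinity_ennreal_def)

lemma P_mono: assumes "a \<le> b" "r \<ge> 0" shows "enn_powr a r \<le> enn_powr b r"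
proof (cases b rule: P_cases)
  case 1 then show ?thesis by simp
next
  case (2 d)
  then obtain c where c: "c \<ge> 0" "a = ennreal c" using assms
    by (metis P_cases ennreal_neq_top infinity_ennreal_def top.extremum_uniqueI)
  then have "c \<le> d" using assms 2 by simp
  then show ?thesis using 2 c assms by (simp add: powr_mono2)
qed

lemma P_inv: assumes "r > 0" shows "enn_powr (enn_powr a r) (1/r) = a"
proof (cases a rule: P_cases)
  case 1 then show ?thesis by simp
next
  case (2 c) then show ?thesis using assms by (simp add: powr_powr)
qed

lemma P_inv': assumes "r > 0" shows "enn_powr (enn_powr a (1/r)) r = a"
proof (cases a rule: P_cases)
  case 1 then show ?thesis by simp
next
  case (2 c) then show ?thesis using assms by (simp add: powr_powr)
qed

lemma P_le_iff: assumes "r > 0" shows "enn_powr a r \<le> enn_powr b r \<longleftrightarrow> a \<le> b"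
  by (metis P_inv P_mono assms less_eq_real_def divide_pos_pos zero_less_one)

lemma P_pos: assumes "r > 0" "a > 0" shows "enn_powr a r > 0"
  by (metis P_0 P_le_iff assms not_le)

lemma P_mult: assumes "r > 0" shows "enn_powr (a * b) r = enn_powr a r * enn_powr b r"
proof (cases a rule: P_cases)
  case 1
  then show ?thesis
  proof (cases "b = 0")
    case True then show ?thesis using 1 by simp
  next
    case False
    then have "enn_powr b r > 0" using P_pos[OF assms, of b] by (simp add: zero_less_iff_neq_zero)
    then show ?thesis using 1 False by (simp add: ennreal_mult_eq_top_iff ennreal_top_mult)
  qed
next
  case (2 c)
  then show ?thesis
  proof (cases b rule: P_cases)
    case 1
    then show ?thesis
    proof (cases "c = 0")
      case True then show ?thesis using 1 2 by simp
    next
      case False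
      then have "enn_powr a r > 0" using P_pos assms 2 by auto
      then show ?thesis using 1 2 False by (simp add: ennreal_mult_top ennreal_mult_eq_top_iff)
    qed
  next
    case (2 d)
    then show ?thesis using \<open>a = _\<close> \<open>c \<ge> 0\<close>
      by (simp add: ennreal_mult[symmetric] powr_mult del: ennreal_mult)
  qed
qed

lemma P_le_self: assumes "a \<le> 1" "r \<ge> 1" shows "enn_powr a r \<le> a"
proof (cases a rule: P_cases)
  case 1 then show ?thesis using assms by (simp add: top_unique)
next
  case (2 c)
  then have "c \<le> 1" using assms by (simp add: ennreal_le_1)
  then show ?thesis using 2 assms
    using powr_mono'[of 1 r c] by (simp add: powr_one)
qed



abbreviation SS :: "(int \<Rightarrow> ennreal) \<Rightarrow> ennreal" where
  "SS f \<equiv> \<integral>\<^sup>+ i. f i \<partial>count_space UNIV"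

lemma SS_ge_point: "f i \<le> SS f"
  using nn_integral_ge_point[of i UNIV f] by simp

lemma bridge: "infsum f (UNIV::int set) = SS f"
proof (rule antisym)
  have "infsum f UNIV = (SUP F\<in>{F. finite F \<and> F \<subseteq> UNIV}. sum f F)"
    by (rule nonneg_infsum_complete) simp
  also have "\<dots> \<le> SS f"
  proof (rule SUP_least)
    fix F :: "int set" assume "F \<in> {F. finite F \<and> F \<subseteq> UNIV}"
    then have "finite F" by simp
    then have "sum f F = (\<integral>\<^sup>+x. f x \<partial>count_space F)" by (simp add: nn_integral_count_space_finite)
    also have "\<dots> = (\<integral>\<^sup>+x. f x * indicator F x \<partial>count_space UNIV)"
      by (simp add: nn_integral_count_space_indicator)
    also have "\<dots> \<le> SS f" by (rule nn_integral_mono) (simp add: indicator_def)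
    finally show "sum f F \<le> SS f" .
  qed
  finally show "infsum f UNIV \<le> SS f" .
next
  define g where "g = from_nat_into (UNIV::int set)"
  have bij: "bij_betw g UNIV (UNIV::int set)"
    unfolding g_def by (rule bij_betw_from_nat_into) (auto simp: infinite_UNIV_int)
  have "SS f = (\<integral>\<^sup>+x. f (g x) \<partial>count_space UNIV)"
    by (rule nn_integral_bij_count_space[OF bij, symmetric])
  also have "\<dots> = (\<Sum>n. f (g n))" by (rule nn_integral_count_space_nat)
  also have "\<dots> = (SUP n. \<Sum>i<n. f (g i))" by (rule suminf_eq_SUP)
  also have "\<dots> \<le> infsum f UNIV"
  proof (rule SUP_least)
    fix n
    have inj: "inj_on g {..<n}" using bij by (meson bij_betw_def inj_on_subset subset_UNIV)
    have "(\<Sum>i<n. f (g i)) = sum f (g ` {..<n})" by (simp add: sum.reindex[OF inj])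
    also have "\<dots> = infsum f (g ` {..<n})" by simp
    also have "\<dots> \<le> infsum f UNIV"
      by (rule infsum_mono_neutral) (auto intro: nonneg_summable_on_complete)
    finally show "(\<Sum>i<n. f (g i)) \<le> infsum f UNIV" .
  qed
  finally show "SS f \<le> infsum f UNIV" .
qed

lemma lnorm_inf: "lnorm top (f::int\<Rightarrow>ennreal) = (SUP i. f i)"
  by (simp add: lnorm_def)

lemma lnorm_fin: "p \<noteq> top \<Longrightarrow> lnorm p (f::int\<Rightarrow>ennreal) = enn_powr (SS (\<lambda>i. enn_powr (f i) (enn2real p))) (1 / enn2real p)"
  by (simp add: lnorm_def bridge)

lemma r_ge1: "1 \<le> p \<Longrightarrow> p \<noteq> top \<Longrightarrow> 1 \<le> enn2real p"
  by (metis enn2real_1 enn2real_mono top.not_eq_extremum)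

lemma N_mono: fixes f g :: "int \<Rightarrow> ennreal" assumes "\<And>i. f i \<le> g i" shows "lnorm p f \<le> lnorm p g"
proof (cases "p = top")
  case True then show ?thesis using assms by (simp add: lnorm_inf SUP_mono')
next
  case False
  have "SS (\<lambda>i. enn_powr (f i) (enn2real p)) \<le> SS (\<lambda>i. enn_powr (g i) (enn2real p))"
    by (rule nn_integral_mono) (simp add: P_mono assms)
  then show ?thesis using False by (simp add: lnorm_fin P_mono)
qed

lemma N_homog: fixes f g :: "int \<Rightarrow> ennreal" assumes "1 \<le> p" shows "lnorm p (\<lambda>i. c * f i) = c * lnorm p f"
proof (cases "p = top")
  case True then show ?thesis by (simp add: lnorm_inf SUP_mult_left_ennreal)
next
  case False
  define r where "r = enn2real p"
  have r: "r \<ge> 1" using r_ge1 assms False r_def by auto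
  have "SS (\<lambda>i. enn_powr (c * f i) r) = SS (\<lambda>i. enn_powr c r * enn_powr (f i) r)"
    using r by (simp add: P_mult)
  also have "\<dots> = enn_powr c r * SS (\<lambda>i. enn_powr (f i) r)"
    by (rule nn_integral_cmult) simp
  finally show ?thesis using False r
    by (simp add: lnorm_fin r_def[symmetric] P_mult P_inv)
qed

lemma N_single: fixes f g :: "int \<Rightarrow> ennreal" assumes "1 \<le> p" shows "f i \<le> lnorm p f"
proof (cases "p = top")
  case True then show ?thesis by (simp add: lnorm_inf SUP_upper)
next
  case False
  define r where "r = enn2real p"
  have r: "r \<ge> 1" using r_ge1 assms False r_def by auto
  have "enn_powr (f i) r \<le> SS (\<lambda>i. enn_powr (f i) r)" by (rule SS_ge_point)
  then have "enn_powr (enn_powr (f i) r) (1/r) \<le> enn_powr (SS (\<lambda>i. enn_powr (f i) r)) (1/r)"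
    using r by (intro P_mono) auto
  then show ?thesis using False r by (simp add: lnorm_fin r_def[symmetric] P_inv)
qed

lemma max_le_sum: "max (a::ennreal) b \<le> a + b"
  by (rule max.boundedI) (simp_all add: add_increasing add_increasing2)

lemma P_max: "r \<ge> 0 \<Longrightarrow> enn_powr (max a b) r = max (enn_powr a r) (enn_powr b r)"
  by (metis P_mono max.absorb1 max.absorb2 nle_le)

lemma two_powr_le: assumes "r \<ge> 1" shows "enn_powr 2 (1/r) \<le> 2"
proof -
  have "(2::real) powr (1/r) \<le> 2 powr 1" using assms by (intro powr_mono) auto
  then have "ennreal (2 powr (1/r)) \<le> ennreal 2" by (simp del: ennreal_numeral)
  then show ?thesis using P_ennreal[of 2 "1/r"] by simp
qed

lemma N_max: fixes f g :: "int \<Rightarrow> ennreal" assumes "1 \<le> p"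
  shows "lnorm p (\<lambda>i. max (f i) (g i)) \<le> 2 * max (lnorm p f) (lnorm p g)"
proof (cases "p = top")
  case True
  have "(SUP i. max (f i) (g i)) \<le> max (SUP i. f i) (SUP i. g i)"
    by (rule SUP_least) (meson SUP_upper UNIV_I max.mono)
  also have "\<dots> \<le> 2 * max (SUP i. f i) (SUP i. g i)"
    by (metis add_increasing2 mult_2 order_refl zero_le)
  finally show ?thesis using True by (simp add: lnorm_inf)
next
  case False
  define r where "r = enn2real p"
  have r: "r \<ge> 1" using r_ge1 assms False r_def by auto
  define F where "F = SS (\<lambda>i. enn_powr (f i) r)"
  define G where "G = SS (\<lambda>i. enn_powr (g i) r)"
  have "SS (\<lambda>i. enn_powr (max (f i) (g i)) r) \<le> SS (\<lambda>i. enn_powr (f i) r + enn_powr (g i) r)"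
    by (rule nn_integral_mono) (metis P_max r max_le_sum order_trans zero_le_one)
  also have "\<dots> = F + G" unfolding F_def G_def by (rule nn_integral_add) auto
  also have "\<dots> \<le> 2 * max F G" by (metis add_mono max.cobounded1 max.cobounded2 mult_2)
  finally have 1: "SS (\<lambda>i. enn_powr (max (f i) (g i)) r) \<le> 2 * max F G" .
  have "lnorm p (\<lambda>i. max (f i) (g i)) \<le> enn_powr (2 * max F G) (1/r)"
    using False 1 r by (simp add: lnorm_fin r_def[symmetric] P_mono)
  also have "\<dots> = enn_powr 2 (1/r) * max (enn_powr F (1/r)) (enn_powr G (1/r))"
    using r by (simp add: P_mult P_max)
  also have "\<dots> \<le> 2 * max (enn_powr F (1/r)) (enn_powr G (1/r))"
    using two_powr_le[OF r] by (rule mult_right_mono) simp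
  finally show ?thesis using False by (simp add: lnorm_fin r_def[symmetric] F_def G_def)
qed

lemma N_tri: fixes f g :: "int \<Rightarrow> ennreal" assumes "1 \<le> p"
  shows "lnorm p (\<lambda>i. f i + g i) \<le> 4 * (lnorm p f + lnorm p g)"
proof -
  have "lnorm p (\<lambda>i. f i + g i) \<le> lnorm p (\<lambda>i. 2 * max (f i) (g i))"
    by (rule N_mono) (metis add_mono max.cobounded1 max.cobounded2 mult_2)
  also have "\<dots> = 2 * lnorm p (\<lambda>i. max (f i) (g i))" using N_homog[OF assms] by simp
  also have "\<dots> \<le> 2 * (2 * max (lnorm p f) (lnorm p g))"
    using N_max[OF assms] by (rule mult_left_mono) simp
  also have "\<dots> \<le> 4 * (lnorm p f + lnorm p g)"
  proof -
    have "max (lnorm p f) (lnorm p g) \<le> lnorm p f + lnorm p g"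
      by (simp add: add_increasing add_increasing2)
    then have "2 * (2 * max (lnorm p f) (lnorm p g)) \<le> 2 * (2 * (lnorm p f + lnorm p g))"
      by (intro mult_left_mono) auto
    then show ?thesis by (simp add: mult.assoc[symmetric])
  qed
  finally show ?thesis .
qed

lemma N_shift: "lnorm p (\<lambda>k. f (k + c)) = lnorm p (f :: int \<Rightarrow> ennreal)"
proof (cases "p = top")
  case True
  have "range (\<lambda>k. f (k + c)) = range f"
    by (auto simp: image_def) (metis diff_add_cancel)
  then show ?thesis using True by (simp add: lnorm_inf)
next
  case False
  have bij: "bij_betw (\<lambda>k::int. k + c) UNIV UNIV"
    by (auto simp: bij_betw_def inj_on_def image_def) (metis diff_add_cancel)
  have "SS (\<lambda>k. enn_powr (f (k + c)) (enn2real p)) = SS (\<lambda>k. enn_powr (f k) (enn2real p))"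
    using nn_integral_bij_count_space[OF bij, of "\<lambda>k. enn_powr (f k) (enn2real p)"] by simp
  then show ?thesis using False by (simp add: lnorm_fin)
qed



lemma SS_shift: "SS (\<lambda>k. f (k + c)) = SS f"
proof -
  have bij: "bij_betw (\<lambda>k::int. k + c) UNIV UNIV"
    by (auto simp: bij_betw_def inj_on_def image_def) (metis diff_add_cancel)
  show ?thesis using nn_integral_bij_count_space[OF bij, of f] by simp
qed

lemma SS_neg: "SS (\<lambda>k. f (- k)) = SS f"
proof -
  have bij: "bij_betw (\<lambda>k::int. - k) UNIV UNIV"
    by (auto simp: bij_betw_def inj_on_def image_def) (metis minus_minus)
  show ?thesis using nn_integral_bij_count_space[OF bij, of f] by simp
qed

definition W :: "int \<Rightarrow> real" where "W n = (3/4) ^ nat \<bar>n\<bar>"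

lemma W_nonneg: "0 \<le> W n" by (simp add: W_def)
lemma W_le1: "W n \<le> 1" by (simp add: W_def power_le_one)
lemma W_sym: "W (- n) = W n" by (simp add: W_def)

lemma SS_half: "SS (\<lambda>j. if 0 \<le> j then ennreal ((3/4) ^ nat j) else 0) = 4"
proof -
  define A where "A = (\<lambda>j::int. if 0 \<le> j then ennreal ((3/4) ^ nat j) else 0)"
  have bij: "bij_betw int UNIV {0::int..}"
    by (auto simp: bij_betw_def image_def) (metis nonneg_int_cases)
  have "SS A = (\<integral>\<^sup>+x. A x \<partial>count_space {0..})"
    by (rule nn_integral_count_space_eq) (auto simp: A_def)
  also have "\<dots> = (\<integral>\<^sup>+x. A (int x) \<partial>count_space UNIV)"
    by (rule nn_integral_bij_count_space[OF bij, symmetric])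
  also have "\<dots> = (\<Sum>n. A (int n))" by (rule nn_integral_count_space_nat)
  also have "\<dots> = (\<Sum>n. ennreal ((3/4) ^ n))" by (simp add: A_def)
  also have "\<dots> = ennreal (\<Sum>n. (3/4::real) ^ n)"
    by (rule suminf_ennreal2) (auto intro: summable_geometric)
  also have "(\<Sum>n. (3/4::real) ^ n) = 4" by (subst suminf_geometric) auto
  finally show ?thesis by (simp add: A_def)
qed

lemma geo: "SS (\<lambda>j. ennreal (W (j - k))) \<le> 8"
proof -
  define A where "A = (\<lambda>j::int. if 0 \<le> j then ennreal ((3/4) ^ nat j) else 0)"
  have "SS (\<lambda>j. ennreal (W (j - k))) = SS (\<lambda>j. ennreal (W j))"
    using SS_shift[of "\<lambda>j. ennreal (W j)" "- k"] by simp
  also have "\<dots> \<le> SS (\<lambda>j. A j + A (- j))"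
    by (rule nn_integral_mono) (auto simp: A_def W_def)
  also have "\<dots> = SS A + SS (\<lambda>j. A (- j))" by (rule nn_integral_add) auto
  also have "\<dots> = 8" using SS_neg[of A] SS_half unfolding A_def by simp
  finally show ?thesis .
qed

lemma c0_powr: assumes "c \<ge> 1" "r \<ge> 1" shows "enn_powr (ennreal c) (1/r) \<le> ennreal c"
proof -
  have "c powr (1/r) \<le> c powr 1" using assms by (intro powr_mono) auto
  then show ?thesis using assms by (simp add: powr_one)
qed

lemma SS_single: "SS (\<lambda>j. if b = j then F else 0) = F"
  by (subst nn_integral_count_space'[of "{b}"]) auto

lemma SS_part: "SS F = SS (\<lambda>j. SS (\<lambda>i. if blk i = j then F i else 0))"
proof -
  have "SS F = SS (\<lambda>i. SS (\<lambda>j. if blk i = j then F i else 0))"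
    by (simp add: SS_single)
  also have "\<dots> = SS (\<lambda>j. SS (\<lambda>i. if blk i = j then F i else 0))"
    by (rule nn_integral_count_space_nn_integral) auto
  finally show ?thesis .
qed

lemma SS_swap: "SS (\<lambda>k. SS (\<lambda>j. F k j)) = SS (\<lambda>j. SS (\<lambda>k. F k j))"
  by (rule nn_integral_count_space_nn_integral) auto



lemma stepC:
  fixes h :: "int \<Rightarrow> ennreal" and blk :: "int \<Rightarrow> int" and \<omega> :: "int \<Rightarrow> real"
  assumes q: "1 \<le> q" and om: "\<And>j. 0 \<le> \<omega> j" "\<And>j. \<omega> j \<le> 1"
    and c0: "SS (\<lambda>j. ennreal (\<omega> j)) \<le> ennreal c0" "1 \<le> c0"
  shows "lnorm q (\<lambda>i. ennreal (\<omega> (blk i)) * ennreal (\<omega> (blk i)) * h i)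
     \<le> ennreal c0 * (SUP j. ennreal (\<omega> j) * lnorm q (\<lambda>i. if blk i = j then h i else 0))"
    (is "?L \<le> _ * ?D")
proof -
  define B where "B j = lnorm q (\<lambda>i. if blk i = j then h i else 0)" for j
  have hB: "h i \<le> B (blk i)" for i
    using N_single[OF q, of "\<lambda>i'. if blk i' = blk i then h i' else 0" i] by (simp add: B_def)
  have D: "ennreal (\<omega> j) * B j \<le> ?D" for j
    unfolding B_def by (rule SUP_upper) simp
  show ?thesis
  proof (cases "q = top")
    case True
    have "?L = (SUP i. ennreal (\<omega> (blk i)) * ennreal (\<omega> (blk i)) * h i)"
      using True lnorm_inf by blast
    also have "\<dots> \<le> ?D"
    proof (rule SUP_least)
      fix i
      have "ennreal (\<omega> (blk i)) * ennreal (\<omega> (blk i)) * h i \<le> 1 * (ennreal (\<omega> (blk i)) * B (blk i))"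
        using hB[of i] om[of "blk i"] unfolding mult.assoc
        by (rule_tac mult_mono) (auto simp: ennreal_le_1 mult_left_mono)
      also have "\<dots> \<le> ?D" using D by simp
      finally show "ennreal (\<omega> (blk i)) * ennreal (\<omega> (blk i)) * h i \<le> ?D" .
    qed
    also have "\<dots> \<le> ennreal c0 * ?D"
      using c0(2) mult_right_mono[of 1 "ennreal c0" ?D] by simp
    finally show ?thesis .
  next
    case False
    define r where "r = enn2real q"
    have r: "r \<ge> 1" using r_ge1 q False r_def by auto
    let ?F = "\<lambda>i. enn_powr (ennreal (\<omega> (blk i)) * ennreal (\<omega> (blk i)) * h i) r"
    have "SS ?F = SS (\<lambda>j. SS (\<lambda>i. if blk i = j then ?F i else 0))" by (rule SS_part)
    also have "\<dots> \<le> SS (\<lambda>j. ennreal (\<omega> j) * enn_powr ?D r)"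
    proof (rule nn_integral_mono)
      fix j
      have "SS (\<lambda>i. if blk i = j then ?F i else 0)
          = SS (\<lambda>i. enn_powr (ennreal (\<omega> j) * ennreal (\<omega> j) * (if blk i = j then h i else 0)) r)"
        by (rule nn_integral_cong) simp
      also have "\<dots> = enn_powr (lnorm q (\<lambda>i. ennreal (\<omega> j) * ennreal (\<omega> j) * (if blk i = j then h i else 0))) r"
        using False r by (simp add: lnorm_fin r_def[symmetric] P_inv')
      also have "\<dots> = enn_powr (ennreal (\<omega> j) * (ennreal (\<omega> j) * B j)) r"
        using N_homog[OF q] by (simp add: B_def mult.assoc)
      also have "\<dots> = enn_powr (ennreal (\<omega> j)) r * enn_powr (ennreal (\<omega> j) * B j) r"
        using r by (simp add: P_mult)
      also have "\<dots> \<le> ennreal (\<omega> j) * enn_powr ?D r"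
      proof (rule mult_mono)
        show "enn_powr (ennreal (\<omega> j)) r \<le> ennreal (\<omega> j)"
          using om[of j] r by (intro P_le_self) (auto simp: ennreal_le_1)
        show "enn_powr (ennreal (\<omega> j) * B j) r \<le> enn_powr ?D r"
          using r D[of j] by (intro P_mono) auto
      qed auto
      finally show "SS (\<lambda>i. if blk i = j then ?F i else 0) \<le> ennreal (\<omega> j) * enn_powr ?D r" .
    qed
    also have "\<dots> = SS (\<lambda>j. ennreal (\<omega> j)) * enn_powr ?D r"
      by (rule nn_integral_multc) simp
    also have "\<dots> \<le> ennreal c0 * enn_powr ?D r" using c0(1) by (rule mult_right_mono) simp
    finally have 1: "SS ?F \<le> ennreal c0 * enn_powr ?D r" .
    have "?L \<le> enn_powr (ennreal c0 * enn_powr ?D r) (1/r)"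
      using False 1 r by (simp add: lnorm_fin r_def[symmetric] P_mono)
    also have "\<dots> = enn_powr (ennreal c0) (1/r) * ?D" using r by (simp add: P_mult P_inv)
    also have "\<dots> \<le> ennreal c0 * ?D" using c0_powr[OF c0(2) r] by (rule mult_right_mono) simp
    finally show ?thesis .
  qed
qed



lemma stepD:
  fixes B :: "int \<Rightarrow> ennreal" and \<omega> :: "int \<Rightarrow> int \<Rightarrow> real"
  assumes p: "1 \<le> p" and om: "\<And>k j. 0 \<le> \<omega> k j" "\<And>k j. \<omega> k j \<le> 1"
    and c0: "\<And>j. SS (\<lambda>k. ennreal (\<omega> k j)) \<le> ennreal c0" "1 \<le> c0"
  shows "lnorm p (\<lambda>k. SUP j. ennreal (\<omega> k j) * B j) \<le> ennreal c0 * lnorm p B"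
proof (cases "p = top")
  case True
  have "(SUP k. SUP j. ennreal (\<omega> k j) * B j) \<le> (SUP j. B j)"
  proof (intro SUP_least)
    fix k j
    have "ennreal (\<omega> k j) * B j \<le> 1 * B j"
      using om by (intro mult_right_mono) (auto simp: ennreal_le_1)
    also have "\<dots> \<le> (SUP j. B j)" by (simp add: SUP_upper)
    finally show "ennreal (\<omega> k j) * B j \<le> (SUP j. B j)" .
  qed
  also have "\<dots> \<le> ennreal c0 * (SUP j. B j)"
    using c0(2) mult_right_mono[of 1 "ennreal c0" "SUP j. B j"] by simp
  finally show ?thesis using True by (simp add: lnorm_inf)
next
  case False
  define r where "r = enn2real p"
  have r: "r \<ge> 1" using r_ge1 p False r_def by auto
  define D where "D k = (SUP j. ennreal (\<omega> k j) * B j)" for k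
  have 1: "enn_powr (D k) r \<le> SS (\<lambda>j. ennreal (\<omega> k j) * enn_powr (B j) r)" for k
  proof -
    have "D k \<le> enn_powr (SS (\<lambda>j. ennreal (\<omega> k j) * enn_powr (B j) r)) (1/r)"
      unfolding D_def
    proof (rule SUP_least)
      fix j
      have "enn_powr (ennreal (\<omega> k j) * B j) r = enn_powr (ennreal (\<omega> k j)) r * enn_powr (B j) r"
        using r by (simp add: P_mult)
      also have "\<dots> \<le> ennreal (\<omega> k j) * enn_powr (B j) r"
        using om[of k j] r P_le_self[of "ennreal (\<omega> k j)" r] by (intro mult_right_mono) (auto simp: ennreal_le_1)
      also have "\<dots> \<le> SS (\<lambda>j. ennreal (\<omega> k j) * enn_powr (B j) r)" by (rule SS_ge_point)
      finally have "enn_powr (ennreal (\<omega> k j) * B j) r \<le> SS (\<lambda>j. ennreal (\<omega> k j) * enn_powr (B j) r)" .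
      then show "ennreal (\<omega> k j) * B j \<le> enn_powr (SS (\<lambda>j. ennreal (\<omega> k j) * enn_powr (B j) r)) (1/r)"
        using r by (metis P_inv' P_le_iff less_le_trans zero_less_one)
    qed
    then show ?thesis using r by (metis P_inv' P_le_iff less_le_trans zero_less_one)
  qed
  have "SS (\<lambda>k. enn_powr (D k) r) \<le> SS (\<lambda>k. SS (\<lambda>j. ennreal (\<omega> k j) * enn_powr (B j) r))"
    by (rule nn_integral_mono) (rule 1)
  also have "\<dots> = SS (\<lambda>j. SS (\<lambda>k. ennreal (\<omega> k j) * enn_powr (B j) r))" by (rule SS_swap)
  also have "\<dots> = SS (\<lambda>j. SS (\<lambda>k. ennreal (\<omega> k j)) * enn_powr (B j) r)"
    by (rule nn_integral_cong, rule nn_integral_multc) simp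
  also have "\<dots> \<le> SS (\<lambda>j. ennreal c0 * enn_powr (B j) r)"
    by (rule nn_integral_mono) (intro mult_right_mono c0(1); simp)
  also have "\<dots> = ennreal c0 * SS (\<lambda>j. enn_powr (B j) r)" by (rule nn_integral_cmult) simp
  finally have 2: "SS (\<lambda>k. enn_powr (D k) r) \<le> ennreal c0 * SS (\<lambda>j. enn_powr (B j) r)" .
  have "lnorm p D \<le> enn_powr (ennreal c0 * SS (\<lambda>j. enn_powr (B j) r)) (1/r)"
    using False 2 r by (simp add: lnorm_fin r_def[symmetric] P_mono)
  also have "\<dots> = enn_powr (ennreal c0) (1/r) * lnorm p B"
    using r False by (simp add: P_mult lnorm_fin r_def[symmetric])
  also have "\<dots> \<le> ennreal c0 * lnorm p B" using c0_powr[OF c0(2) r] by (rule mult_right_mono) simp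
  finally show ?thesis unfolding D_def .
qed



lemma int_induct_from: 
  assumes "j \<le> (k::int)" "P j" "\<And>m. j \<le> m \<Longrightarrow> P m \<Longrightarrow> P (m + 1)" shows "P k"
  using assms by (induction k rule: int_ge_induct) auto

lemma half_W: "0 \<le> n \<Longrightarrow> (1/2::real) ^ nat n \<le> W n * W n"
proof -
  assume "0 \<le> n"
  have "W n * W n = (9/16) ^ nat \<bar>n\<bar>" by (simp add: W_def power_mult_distrib[symmetric])
  moreover have "(1/2::real) ^ nat \<bar>n\<bar> \<le> (9/16) ^ nat \<bar>n\<bar>" by (rule power_mono) auto
  ultimately show ?thesis using \<open>0 \<le> n\<close> by simp
qed

lemma frac_half: "(a::real) / b \<le> 1/2 \<Longrightarrow> b > 0 \<Longrightarrow> 2 * a \<le> b"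
  by (simp add: divide_le_eq)

context
  fixes \<phi> :: "real \<Rightarrow> real" and t :: "int \<Rightarrow> real"
  assumes phi: "nondeg_quasi_concave \<phi>" and disc: "discretizing_sequence \<phi> t"
begin

lemma phipos: "y > 0 \<Longrightarrow> \<phi> y > 0" using phi by (simp add: nondeg_quasi_concave_def)
lemma phimono: "0 < a \<Longrightarrow> a \<le> b \<Longrightarrow> \<phi> a \<le> \<phi> b" using phi by (simp add: nondeg_quasi_concave_def)
lemma psimono: "0 < a \<Longrightarrow> a \<le> b \<Longrightarrow> \<phi> b / b \<le> \<phi> a / a" using phi by (simp add: nondeg_quasi_concave_def)

lemma tpos: "t k > 0" using disc by (simp add: discretizing_sequence_def strongly_increasing_def)

lemma tstep: "2 * t k \<le> t (k + 1)"
proof -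
  have "t (k+1) / t k \<ge> 2" using disc by (simp add: discretizing_sequence_def strongly_increasing_def)
  then show ?thesis using tpos[of k] by (simp add: le_divide_eq)
qed

lemma phitpos: "\<phi> (t k) > 0" using phipos tpos by blast

lemma phistep: "2 * \<phi> (t k) \<le> \<phi> (t (k + 1))"
proof -
  have "\<phi> (t (k+1)) / \<phi> (t k) \<ge> 2" using disc by (simp add: discretizing_sequence_def strongly_increasing_def)
  then show ?thesis using phitpos[of k] by (simp add: le_divide_eq)
qed

lemma psistep: "2 * (\<phi> (t (k + 1)) / t (k + 1)) \<le> \<phi> (t k) / t k"
proof -
  have "(\<phi> (t (k+1)) / t (k+1)) / (\<phi> (t k) / t k) \<le> 1/2"
    using disc by (simp add: discretizing_sequence_def strongly_decreasing_def)
  moreover have "\<phi> (t k) / t k > 0" using phitpos tpos by simp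
  ultimately show ?thesis using frac_half by blast
qed

lemma Zcase: "\<phi> (t (k + 1)) \<le> 2 * \<phi> (t k) \<or> \<phi> (t k) / t k \<le> 2 * (\<phi> (t (k + 1)) / t (k + 1))"
proof -
  obtain Z1 Z2 where "Z1 \<union> Z2 = UNIV" "\<forall>k\<in>Z1. \<phi> (t (k + 1)) \<le> 2 * \<phi> (t k)"
    "\<forall>k\<in>Z2. \<phi> (t k) / t k \<le> 2 * (\<phi> (t (k + 1)) / t (k + 1))"
    using disc unfolding discretizing_sequence_def by blast
  then show ?thesis by blast
qed

lemma tmono: assumes "j \<le> k" shows "t j \<le> t k"
  using assms
proof (induction k rule: int_ge_induct)
  case (step m) then show ?case using tstep[of m] tpos[of m] by linarith
qed simp

lemma phigeo: assumes "j \<le> k" shows "\<phi> (t j) \<le> (1/2) ^ nat (k - j) * \<phi> (t k)"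
  using assms
proof (induction k rule: int_ge_induct)
  case (step m)
  have e: "nat (m + 1 - j) = Suc (nat (m - j))" using step by simp
  obtain c :: real where c: "c = (1/2) ^ nat (m - j)" "c \<ge> 0" by simp
  have "c * (2 * \<phi> (t m)) \<le> c * \<phi> (t (m + 1))"
    using phistep[of m] c(2) by (rule mult_left_mono)
  moreover have "\<phi> (t j) \<le> c * \<phi> (t m)" using step c(1) by simp
  moreover have "c * (2 * \<phi> (t m)) = (c * \<phi> (t m)) * 2" by simp
  ultimately have "\<phi> (t j) * 2 \<le> c * \<phi> (t (m + 1))" by linarith
  then show ?case using e c(1) by simp
qed simp

lemma psigeo: assumes "j \<le> k" shows "\<phi> (t k) / t k \<le> (1/2) ^ nat (k - j) * (\<phi> (t j) / t j)"
  using assms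
proof (induction k rule: int_ge_induct)
  case (step m)
  have e: "nat (m + 1 - j) = Suc (nat (m - j))" using step by simp
  have "2 * (\<phi> (t (m + 1)) / t (m + 1)) \<le> (1/2) ^ nat (m - j) * (\<phi> (t j) / t j)"
    using psistep[of m] step by linarith
  then show ?case using e by simp
qed simp

lemma t_large: "\<exists>k. y \<le> t k"
proof -
  obtain n where n: "y / t 0 < 2 ^ n" using real_arch_pow[of 2 "y / t 0"] by auto
  have "2 ^ n * t 0 \<le> t (int n)"
  proof (induction n)
    case (Suc n) then show ?case using tstep[of "int n"] by (simp add: algebra_simps)
  qed simp
  moreover have "y < 2 ^ n * t 0" using n tpos[of 0] by (simp add: divide_less_eq)
  ultimately have "y \<le> t (int n)" by linarith
  then show ?thesis by blast
qed

lemma t_small: assumes "y > 0" shows "\<exists>k. t k < y"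
proof -
  obtain n where n: "t 0 / y < 2 ^ n" using real_arch_pow[of 2 "t 0 / y"] by auto
  have "2 ^ n * t (- int n) \<le> t 0"
  proof (induction n)
    case (Suc n)
    have "2 * t (- int (Suc n)) \<le> t (- int n)" using tstep[of "- int (Suc n)"] by simp
    then have B: "(2::real) ^ n * (2 * t (- int (Suc n))) \<le> 2 ^ n * t (- int n)"
      by (rule mult_left_mono) simp
    have "(2::real) ^ Suc n * t (- int (Suc n)) = 2 ^ n * (2 * t (- int (Suc n)))" by simp
    then show ?case using B Suc.IH by linarith
  qed simp
  moreover have "t 0 < 2 ^ n * y" using n assms by (simp add: divide_less_eq mult.commute)
  ultimately have "2 ^ n * t (- int n) < 2 ^ n * y" by linarith
  then have "t (- int n) < y" by (rule mult_less_cancel_left_pos[THEN iffD1, rotated]) simp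
  then show ?thesis by blast
qed

lemma blk_ex: assumes "y > 0" shows "\<exists>k. t (k - 1) < y \<and> y \<le> t k"
proof -
  obtain a where a: "t a < y" using t_small assms by blast
  obtain b where b: "y \<le> t b" using t_large by blast
  have ab: "a < b"
  proof (rule ccontr)
    assume "\<not> a < b" then have "t b \<le> t a" using tmono by simp
    then show False using a b by linarith
  qed
  have "\<forall>n::nat. y \<le> t (a + int n) \<longrightarrow> (\<exists>k. t (k - 1) < y \<and> y \<le> t k)"
  proof
    fix n show "y \<le> t (a + int n) \<longrightarrow> (\<exists>k. t (k - 1) < y \<and> y \<le> t k)"
    proof (induction n)
      case 0 then show ?case using a by simp
    next
      case (Suc n)
      show ?case
      proof
        assume "y \<le> t (a + int (Suc n))"
        show "\<exists>k. t (k - 1) < y \<and> y \<le> t k"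
        proof (cases "y \<le> t (a + int n)")
          case True then show ?thesis using Suc by blast
        next
          case False
          then show ?thesis using \<open>y \<le> t (a + int (Suc n))\<close>
            by (intro exI[of _ "a + int (Suc n)"]) simp
        qed
      qed
    qed
  qed
  then have "y \<le> t (a + int (nat (b - a))) \<longrightarrow> (\<exists>k. t (k - 1) < y \<and> y \<le> t k)" by blast
  moreover have "a + int (nat (b - a)) = b" using ab by simp
  ultimately show ?thesis using b by simp
qed

lemma blk_uniq: assumes "t (k - 1) < y" "y \<le> t k" "t (k' - 1) < y" "y \<le> t k'" shows "k = k'"
proof (rule ccontr)
  assume "k \<noteq> k'"
  then have "k \<le> k' - 1 \<or> k' \<le> k - 1" by linarith
  then show False
  proof
    assume "k \<le> k' - 1" then have "t k \<le> t (k' - 1)" by (rule tmono)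
    then show False using assms by linarith
  next
    assume "k' \<le> k - 1" then have "t k' \<le> t (k - 1)" by (rule tmono)
    then show False using assms by linarith
  qed
qed

definition blk :: "real \<Rightarrow> int" where "blk y = (THE k. t (k - 1) < y \<and> y \<le> t k)"

lemma blk_spec: assumes "y > 0" shows "t (blk y - 1) < y" "y \<le> t (blk y)"
proof -
  have "t (blk y - 1) < y \<and> y \<le> t (blk y)"
    unfolding blk_def by (rule theI') (use blk_ex[OF assms] blk_uniq in blast)
  then show "t (blk y - 1) < y" "y \<le> t (blk y)" by auto
qed

lemma blk_iff: assumes "y > 0" shows "(t (k - 1) < y \<and> y \<le> t k) \<longleftrightarrow> blk y = k"
  using blk_spec[OF assms] blk_uniq by blast

end


lemma r_Z1: assumes "0 < (Pk::real)" "0 < Ps" "Pk \<le> 2 * Ps" "0 < v" "0 \<le> X" shows "X * (v / Ps) \<le> 2 / Pk * (X * v)"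
proof -
  have "1/Ps \<le> 2/Pk" using assms by (simp add: field_simps)
  then have "(X * v) * (1 / Ps) \<le> (X * v) * (2 / Pk)" using assms by (intro mult_left_mono) auto
  then show ?thesis by (simp add: field_simps)
qed

lemma r_Z2: assumes "0 < (w::real)" "0 < s" "0 < Ps" "0 < Pm" "0 < tm" "Pm / tm \<le> 2 * (Ps / s)" "0 \<le> X"
  shows "X * ((w * s) / Ps) \<le> 2 / Pm * (X * (tm * w))"
proof -
  have "Pm * s \<le> 2 * Ps * tm" using assms by (simp add: field_simps)
  then have "s / Ps \<le> 2 * tm / Pm" using assms by (simp add: field_simps)
  then have "(X * w) * (s / Ps) \<le> (X * w) * (2 * tm / Pm)" using assms by (intro mult_left_mono) auto
  then show ?thesis by (simp add: field_simps)
qed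

lemma enn_quarter: "ennreal 4 * (ennreal (1/4) * a) = a"
proof -
  have "ennreal 4 * ennreal (1/4) = ennreal (4 * (1/4))" by (rule ennreal_mult[symmetric]) auto
  then have "ennreal 4 * ennreal (1/4) = 1" by simp
  then show ?thesis by (simp add: mult.assoc[symmetric])
qed

lemma enn_quarter2: "ennreal (1/4) * (4 * a) = a"
proof -
  have "ennreal (1/4) * ennreal 4 = ennreal ((1/4) * 4)" by (rule ennreal_mult[symmetric]) auto
  then have "ennreal (1/4) * 4 = 1" by simp
  then show ?thesis by (metis mult.assoc mult_1)
qed

lemma Klow:
  fixes v w c x :: "int \<Rightarrow> real" and q :: ennreal and \<tau> :: real
  assumes q: "1 \<le> q" and tau: "\<tau> \<ge> 0" and c: "\<And>i. 0 \<le> c i" "\<And>i. c i \<le> v i" "\<And>i. c i \<le> \<tau> * w i"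
    and wnn: "\<And>i. 0 \<le> w i"
  shows "lnorm q (\<lambda>i. ennreal (\<bar>x i\<bar> * c i)) \<le> 4 * Kfun (lq_weighted_norm q v) (lq_weighted_norm q w) \<tau> x"
proof -
  have "ennreal (1/4) * lnorm q (\<lambda>i. ennreal (\<bar>x i\<bar> * c i)) \<le> Kfun (lq_weighted_norm q v) (lq_weighted_norm q w) \<tau> x"
    unfolding Kfun_def
  proof (rule INF_greatest)
    fix y assume "y \<in> {(x0, x1). x = x0 + x1}"
    then obtain x0 x1 where y: "y = (x0, x1)" and xx: "x = x0 + x1" by auto
    have pw: "ennreal (\<bar>x i\<bar> * c i) \<le> ennreal \<bar>x0 i * v i\<bar> + ennreal \<tau> * ennreal \<bar>x1 i * w i\<bar>" for i
    proof -
      have vpos: "0 \<le> v i" using c(1,2)[of i] by linarith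
      have wpos: "0 \<le> \<tau> * w i" using c(1,3)[of i] by linarith
      have "\<bar>x i\<bar> * c i \<le> (\<bar>x0 i\<bar> + \<bar>x1 i\<bar>) * c i"
        using xx c(1)[of i] by (intro mult_right_mono) (auto simp: abs_triangle_ineq)
      also have "\<dots> = \<bar>x0 i\<bar> * c i + \<bar>x1 i\<bar> * c i" by (simp add: algebra_simps)
      also have "\<dots> \<le> \<bar>x0 i\<bar> * v i + \<bar>x1 i\<bar> * (\<tau> * w i)"
        using c(2,3)[of i] by (intro add_mono mult_left_mono) auto
      also have "\<dots> = \<bar>x0 i * v i\<bar> + \<tau> * \<bar>x1 i * w i\<bar>"
        using vpos wnn[of i] tau by (simp add: abs_mult algebra_simps)
      finally have "\<bar>x i\<bar> * c i \<le> \<bar>x0 i * v i\<bar> + \<tau> * \<bar>x1 i * w i\<bar>" .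
      then have "ennreal (\<bar>x i\<bar> * c i) \<le> ennreal (\<bar>x0 i * v i\<bar> + \<tau> * \<bar>x1 i * w i\<bar>)"
        by (rule ennreal_leI)
      also have "\<dots> = ennreal \<bar>x0 i * v i\<bar> + ennreal \<tau> * ennreal \<bar>x1 i * w i\<bar>"
        using tau by (simp add: ennreal_plus ennreal_mult)
      finally show ?thesis .
    qed
    have "lnorm q (\<lambda>i. ennreal (\<bar>x i\<bar> * c i))
        \<le> lnorm q (\<lambda>i. ennreal \<bar>x0 i * v i\<bar> + ennreal \<tau> * ennreal \<bar>x1 i * w i\<bar>)"
      by (rule N_mono) (rule pw)
    also have "\<dots> \<le> 4 * (lnorm q (\<lambda>i. ennreal \<bar>x0 i * v i\<bar>) + lnorm q (\<lambda>i. ennreal \<tau> * ennreal \<bar>x1 i * w i\<bar>))"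
      by (rule N_tri[OF q])
    also have "\<dots> = 4 * (lq_weighted_norm q v x0 + ennreal \<tau> * lq_weighted_norm q w x1)"
      by (simp add: lq_weighted_norm_def N_homog[OF q])
    finally have "ennreal (1/4) * lnorm q (\<lambda>i. ennreal (\<bar>x i\<bar> * c i))
       \<le> ennreal (1/4) * (4 * (lq_weighted_norm q v x0 + ennreal \<tau> * lq_weighted_norm q w x1))"
      by (rule mult_left_mono) simp
    also have "\<dots> = lq_weighted_norm q v x0 + ennreal \<tau> * lq_weighted_norm q w x1"
      by (rule enn_quarter2)
    finally show "ennreal (1/4) * lnorm q (\<lambda>i. ennreal (\<bar>x i\<bar> * c i))
       \<le> lq_weighted_norm q v (fst y) + ennreal \<tau> * lq_weighted_norm q w (snd y)" using y by simp
  qed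
  then have "4 * (ennreal (1/4) * lnorm q (\<lambda>i. ennreal (\<bar>x i\<bar> * c i))) \<le> 4 * Kfun (lq_weighted_norm q v) (lq_weighted_norm q w) \<tau> x"
    by (rule mult_left_mono) simp
  then show ?thesis unfolding enn_quarter[of "lnorm q (\<lambda>i. ennreal (\<bar>x i\<bar> * c i))", simplified] .
qed



lemma enn_alg: "2 * (a::ennreal) * (4 * b) = 8 * (b * a)"
proof -
  have "2 * a * (4 * b) = (2 * 4) * (b * a)" by (simp only: mult_ac)
  then show ?thesis by simp
qed

lemma enn4: "ennreal a * (2 * (ennreal b * ennreal b * ennreal c)) = ennreal (a * (2 * (b * b * c)))"
  if "0 \<le> a" "0 \<le> b" "0 \<le> c" for a b c :: real
  using that by (simp add: ennreal_mult)

context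
  fixes \<phi> :: "real \<Rightarrow> real" and t :: "int \<Rightarrow> real" and v w :: "int \<Rightarrow> real" and p q :: ennreal
  assumes phi: "nondeg_quasi_concave \<phi>" and disc: "discretizing_sequence \<phi> t"
    and p: "1 \<le> p" and q: "1 \<le> q" and vpos: "\<forall>i. v i > 0" and wpos: "\<forall>i. w i > 0"
begin

lemmas tpos' = tpos[OF phi disc] and phitpos' = phitpos[OF phi disc]
  and phipos' = phipos[OF phi disc] and phimono' = phimono[OF phi disc]
  and psimono' = psimono[OF phi disc] and tmono' = tmono[OF phi disc]
  and phigeo' = phigeo[OF phi disc] and psigeo' = psigeo[OF phi disc]
  and blk_spec' = blk_spec[OF phi disc] and blk_iff' = blk_iff[OF phi disc]
  and Zcase' = Zcase[OF phi disc]

lemma dir2: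
  "interp_norm (lq_weighted_norm q v) (lq_weighted_norm q w) \<phi> t p x
   \<le> ennreal 256 * lp_lq_blocks_weighted_norm p q (\<lambda>k. {i. t (k - 1) < v i / w i \<and> v i / w i \<le> t k})
              (\<lambda>i. v i / \<phi> (v i / w i)) x"
proof -
  define s where "s i = v i / w i" for i
  have spos: "s i > 0" for i using vpos wpos by (simp add: s_def)
  define u where "u i = v i / \<phi> (s i)" for i
  have phis: "\<phi> (s i) > 0" for i using phipos' spos by blast
  have upos: "u i > 0" for i using vpos phis by (simp add: u_def)
  have vu: "v i = u i * \<phi> (s i)" for i using phis[of i] by (simp add: u_def)
  have wu: "w i = u i * (\<phi> (s i) / s i)" for i
    using phis[of i] vpos[rule_format, of i] wpos[rule_format, of i] by (simp add: u_def s_def)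
  define h where "h i = ennreal (\<bar>x i\<bar> * u i)" for i
  define bl where "bl i = blk t (s i)" for i
  have blM: "(t (k - 1) < s i \<and> s i \<le> t k) \<longleftrightarrow> bl i = k" for i k
    unfolding bl_def using blk_iff'[OF spos] by blast
  have blS: "t (bl i - 1) < s i" "s i \<le> t (bl i)" for i using blM by blast+
  define B where "B j = lnorm q (\<lambda>i. if bl i = j then h i else 0)" for j
  have RHS: "lp_lq_blocks_weighted_norm p q (\<lambda>k. {i. t (k - 1) < v i / w i \<and> v i / w i \<le> t k})
              (\<lambda>i. v i / \<phi> (v i / w i)) x = lnorm p B"
  proof -
    have "(\<lambda>i. if i \<in> {i. t (k - 1) < v i / w i \<and> v i / w i \<le> t k} then ennreal \<bar>x i * (v i / \<phi> (v i / w i))\<bar> else 0)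
        = (\<lambda>i. if bl i = k then h i else 0)" for k
    proof
      fix i
      have "\<bar>x i * (v i / \<phi> (v i / w i))\<bar> = \<bar>x i\<bar> * u i"
        using vpos[rule_format, of i] phis[of i] by (simp add: abs_mult u_def s_def)
      then show "(if i \<in> {i. t (k - 1) < v i / w i \<and> v i / w i \<le> t k} then ennreal \<bar>x i * (v i / \<phi> (v i / w i))\<bar> else 0)
        = (if bl i = k then h i else 0)"
        using blM[of k i] by (simp add: h_def s_def)
    qed
    then show ?thesis by (simp add: lp_lq_blocks_weighted_norm_def B_def[abs_def])
  qed
  define D where "D k = (SUP j. ennreal (W (j - k)) * B j)" for k
  have Ck: "lnorm q (\<lambda>i. ennreal (W (bl i - k)) * ennreal (W (bl i - k)) * h i) \<le> ennreal 8 * D k" for k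
    using stepC[OF q, of "\<lambda>j. W (j - k)" 8 bl h] W_nonneg W_le1 geo[of k]
    by (simp add: D_def B_def)
  have Lk: "Kfun (lq_weighted_norm q v) (lq_weighted_norm q w) (t k) x / ennreal (\<phi> (t k)) \<le> ennreal 32 * D k" for k
  proof -
    define G where "G = lnorm q (\<lambda>i. ennreal (W (bl i - k)) * ennreal (W (bl i - k)) * h i)"
    define x0 where "x0 i = (if s i \<le> t k then x i else 0)" for i
    define x1 where "x1 i = (if s i \<le> t k then 0 else x i)" for i
    have xx: "x = x0 + x1" by (rule ext) (simp add: x0_def x1_def)
    have K1: "Kfun (lq_weighted_norm q v) (lq_weighted_norm q w) (t k) x
        \<le> lq_weighted_norm q v x0 + ennreal (t k) * lq_weighted_norm q w x1"
      unfolding Kfun_def by (rule INF_lower2[of "(x0, x1)"]) (auto simp: xx)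
    have Wn: "0 \<le> W (bl i - k)" for i by (rule W_nonneg)
    have real0: "\<bar>x0 i * v i\<bar> \<le> \<phi> (t k) * (2 * (W (bl i - k) * W (bl i - k) * (\<bar>x i\<bar> * u i)))" for i
    proof (cases "s i \<le> t k")
      case True
      have jk: "bl i \<le> k"
      proof (rule ccontr)
        assume "\<not> bl i \<le> k" then have "t k \<le> t (bl i - 1)" by (intro tmono') auto
        then show False using True blS[of i] by linarith
      qed
      have "\<phi> (s i) \<le> \<phi> (t (bl i))" using blS(2)[of i] spos[of i] by (rule phimono'[rotated])
      also have "\<dots> \<le> (1/2) ^ nat (k - bl i) * \<phi> (t k)" using jk by (rule phigeo')
      also have "\<dots> \<le> (W (k - bl i) * W (k - bl i)) * \<phi> (t k)"
        using half_W[of "k - bl i"] jk phitpos'[of k] by (intro mult_right_mono) auto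
      also have "\<dots> \<le> 2 * (W (bl i - k) * W (bl i - k)) * \<phi> (t k)"
        using W_sym[of "k - bl i"] W_nonneg[of "bl i - k"] phitpos'[of k]
        by (simp add: mult_right_mono)
      finally have a: "\<phi> (s i) \<le> 2 * (W (bl i - k) * W (bl i - k)) * \<phi> (t k)" .
      have "\<bar>x0 i * v i\<bar> = (\<bar>x i\<bar> * u i) * \<phi> (s i)"
        using True vu[of i] upos[of i] phis[of i] by (simp add: x0_def abs_mult)
      also have "\<dots> \<le> (\<bar>x i\<bar> * u i) * (2 * (W (bl i - k) * W (bl i - k)) * \<phi> (t k))"
        using a upos[of i] by (intro mult_left_mono) auto
      also have "\<dots> = \<phi> (t k) * (2 * (W (bl i - k) * W (bl i - k) * (\<bar>x i\<bar> * u i)))" by simp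
      finally show ?thesis .
    next
      case False
      have "0 \<le> \<phi> (t k) * (2 * (W (bl i - k) * W (bl i - k) * (\<bar>x i\<bar> * u i)))"
        using phitpos'[of k] upos[of i] W_nonneg[of "bl i - k"] by simp
      then show ?thesis using False by (simp add: x0_def)
    qed
    have real1: "t k * \<bar>x1 i * w i\<bar> \<le> \<phi> (t k) * (2 * (W (bl i - k) * W (bl i - k) * (\<bar>x i\<bar> * u i)))" for i
    proof (cases "s i \<le> t k")
      case True
      have "0 \<le> \<phi> (t k) * (2 * (W (bl i - k) * W (bl i - k) * (\<bar>x i\<bar> * u i)))"
        using phitpos'[of k] upos[of i] W_nonneg[of "bl i - k"] by simp
      then show ?thesis using True by (simp add: x1_def)
    next
      case False
      have jk: "k \<le> bl i - 1"
      proof (rule ccontr)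
        assume "\<not> k \<le> bl i - 1" then have "t (bl i) \<le> t k" by (intro tmono') auto
        then show False using False blS[of i] by linarith
      qed
      have "\<phi> (s i) / s i \<le> \<phi> (t (bl i - 1)) / t (bl i - 1)"
        using blS(1)[of i] tpos'[of "bl i - 1"] by (intro psimono') auto
      also have "\<dots> \<le> (1/2) ^ nat (bl i - 1 - k) * (\<phi> (t k) / t k)" using jk by (rule psigeo')
      also have "\<dots> = 2 * ((1/2) ^ nat (bl i - k)) * (\<phi> (t k) / t k)"
      proof -
        have "nat (bl i - k) = Suc (nat (bl i - 1 - k))" using jk by simp
        then show ?thesis by simp
      qed
      also have "\<dots> \<le> 2 * (W (bl i - k) * W (bl i - k)) * (\<phi> (t k) / t k)"
        using half_W[of "bl i - k"] jk phitpos'[of k] tpos'[of k] by (intro mult_right_mono) auto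
      finally have a: "\<phi> (s i) / s i \<le> 2 * (W (bl i - k) * W (bl i - k)) * (\<phi> (t k) / t k)" .
      have "t k * \<bar>x1 i * w i\<bar> = t k * ((\<bar>x i\<bar> * u i) * (\<phi> (s i) / s i))"
        using False wu[of i] upos[of i] phis[of i] spos[of i] tpos'[of k] by (simp add: x1_def abs_mult)
      also have "\<dots> \<le> t k * ((\<bar>x i\<bar> * u i) * (2 * (W (bl i - k) * W (bl i - k)) * (\<phi> (t k) / t k)))"
        using a upos[of i] tpos'[of k] by (intro mult_left_mono) auto
      also have "\<dots> = \<phi> (t k) * (2 * (W (bl i - k) * W (bl i - k) * (\<bar>x i\<bar> * u i)))"
        using tpos'[of k] by simp
      finally show ?thesis .
    qed
    have N0: "lq_weighted_norm q v x0 \<le> ennreal (\<phi> (t k)) * (2 * G)"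
    proof -
      have "lq_weighted_norm q v x0 \<le> lnorm q (\<lambda>i. ennreal (\<phi> (t k)) * (2 * (ennreal (W (bl i - k)) * ennreal (W (bl i - k)) * h i)))"
        unfolding lq_weighted_norm_def
      proof (rule N_mono)
        fix i
        show "ennreal \<bar>x0 i * v i\<bar> \<le> ennreal (\<phi> (t k)) * (2 * (ennreal (W (bl i - k)) * ennreal (W (bl i - k)) * h i))"
          unfolding h_def using real0[of i] phitpos'[of k] W_nonneg[of "bl i - k"] upos[of i]
          by (subst enn4) (auto intro: ennreal_leI)
      qed
      also have "\<dots> = ennreal (\<phi> (t k)) * (2 * G)" by (simp add: N_homog[OF q] G_def)
      finally show ?thesis .
    qed
    have N1: "ennreal (t k) * lq_weighted_norm q w x1 \<le> ennreal (\<phi> (t k)) * (2 * G)"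
    proof -
      have "ennreal (t k) * lq_weighted_norm q w x1 = lnorm q (\<lambda>i. ennreal (t k) * ennreal \<bar>x1 i * w i\<bar>)"
        unfolding lq_weighted_norm_def by (simp add: N_homog[OF q])
      also have "\<dots> \<le> lnorm q (\<lambda>i. ennreal (\<phi> (t k)) * (2 * (ennreal (W (bl i - k)) * ennreal (W (bl i - k)) * h i)))"
      proof (rule N_mono)
        fix i
        have "ennreal (t k) * ennreal \<bar>x1 i * w i\<bar> = ennreal (t k * \<bar>x1 i * w i\<bar>)"
          using tpos'[of k] by (simp add: ennreal_mult)
        also have "\<dots> \<le> ennreal (\<phi> (t k) * (2 * (W (bl i - k) * W (bl i - k) * (\<bar>x i\<bar> * u i))))"
          using real1[of i] by (rule ennreal_leI)
        also have "\<dots> = ennreal (\<phi> (t k)) * (2 * (ennreal (W (bl i - k)) * ennreal (W (bl i - k)) * h i))"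
          unfolding h_def using phitpos'[of k] W_nonneg[of "bl i - k"] upos[of i]
          by (subst enn4) auto
        finally show "ennreal (t k) * ennreal \<bar>x1 i * w i\<bar> \<le> ennreal (\<phi> (t k)) * (2 * (ennreal (W (bl i - k)) * ennreal (W (bl i - k)) * h i))" .
      qed
      also have "\<dots> = ennreal (\<phi> (t k)) * (2 * G)" by (simp add: N_homog[OF q] G_def)
      finally show ?thesis .
    qed
    have "Kfun (lq_weighted_norm q v) (lq_weighted_norm q w) (t k) x \<le> ennreal (\<phi> (t k)) * (2 * G) + ennreal (\<phi> (t k)) * (2 * G)"
      using K1 N0 N1 by (meson add_mono order_trans)
    also have "\<dots> = ennreal (\<phi> (t k)) * (2 * G + 2 * G)" by (rule distrib_left[symmetric])
    also have "2 * G + 2 * G = (2 + 2) * G" by (rule distrib_right[symmetric])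
    also have "(2::ennreal) + 2 = 4" by simp
    finally have K2: "Kfun (lq_weighted_norm q v) (lq_weighted_norm q w) (t k) x \<le> ennreal (\<phi> (t k)) * (4 * G)" .
    have "Kfun (lq_weighted_norm q v) (lq_weighted_norm q w) (t k) x / ennreal (\<phi> (t k))
        \<le> ennreal (\<phi> (t k)) * (4 * G) / ennreal (\<phi> (t k))"
      using K2 by (rule divide_right_mono_ennreal)
    also have "\<dots> = 4 * G"
      using phitpos'[of k] by (metis ennreal_eq_0_iff ennreal_neq_top ennreal_mult_divide_eq mult.commute not_le)
    also have "\<dots> \<le> 4 * (ennreal 8 * D k)" using Ck[of k] unfolding G_def by (rule mult_left_mono) simp
    also have "\<dots> = ennreal 32 * D k"
    proof -
      have "(4::ennreal) * ennreal 8 = ennreal 32" by simp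
      then show ?thesis by (simp add: mult.assoc[symmetric])
    qed
    finally show ?thesis .
  qed
  have "interp_norm (lq_weighted_norm q v) (lq_weighted_norm q w) \<phi> t p x \<le> lnorm p (\<lambda>k. ennreal 32 * D k)"
    unfolding interp_norm_def by (rule N_mono) (rule Lk)
  also have "\<dots> = ennreal 32 * lnorm p D" by (rule N_homog[OF p])
  also have "\<dots> \<le> ennreal 32 * (ennreal 8 * lnorm p B)"
  proof (rule mult_left_mono)
    show "lnorm p D \<le> ennreal 8 * lnorm p B"
      unfolding D_def
    proof (rule stepD[OF p])
      fix j
      have "SS (\<lambda>k. ennreal (W (j - k))) = SS (\<lambda>k. ennreal (W (k - j)))"
        using W_sym by (metis minus_diff_eq)
      also have "\<dots> \<le> 8" by (rule geo)
      finally show "SS (\<lambda>k. ennreal (W (j - k))) \<le> ennreal 8" by simp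
    qed (auto simp: W_nonneg W_le1)
  qed simp
  also have "\<dots> = ennreal 256 * lnorm p B"
  proof -
    have "ennreal 32 * ennreal 8 = ennreal 256" by simp
    then show ?thesis by (simp add: mult.assoc[symmetric])
  qed
  finally show ?thesis using RHS by simp
qed

lemma dir1:
  "lp_lq_blocks_weighted_norm p q (\<lambda>k. {i. t (k - 1) < v i / w i \<and> v i / w i \<le> t k})
              (\<lambda>i. v i / \<phi> (v i / w i)) x
   \<le> ennreal 256 * interp_norm (lq_weighted_norm q v) (lq_weighted_norm q w) \<phi> t p x"
proof -
  define s where "s i = v i / w i" for i
  have spos: "s i > 0" for i using vpos wpos by (simp add: s_def)
  define u where "u i = v i / \<phi> (s i)" for i
  have phis: "\<phi> (s i) > 0" for i using phipos' spos by blast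
  have upos: "u i > 0" for i using vpos phis by (simp add: u_def)
  have vws: "v i = w i * s i" for i using wpos[rule_format, of i] by (simp add: s_def)
  define h where "h i = ennreal (\<bar>x i\<bar> * u i)" for i
  define bl where "bl i = blk t (s i)" for i
  have blM: "(t (k - 1) < s i \<and> s i \<le> t k) \<longleftrightarrow> bl i = k" for i k
    unfolding bl_def using blk_iff'[OF spos] by blast
  define B where "B j = lnorm q (\<lambda>i. if bl i = j then h i else 0)" for j
  have RHS: "lp_lq_blocks_weighted_norm p q (\<lambda>k. {i. t (k - 1) < v i / w i \<and> v i / w i \<le> t k})
              (\<lambda>i. v i / \<phi> (v i / w i)) x = lnorm p B"
  proof -
    have "(\<lambda>i. if i \<in> {i. t (k - 1) < v i / w i \<and> v i / w i \<le> t k} then ennreal \<bar>x i * (v i / \<phi> (v i / w i))\<bar> else 0)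
        = (\<lambda>i. if bl i = k then h i else 0)" for k
    proof
      fix i
      have "\<bar>x i * (v i / \<phi> (v i / w i))\<bar> = \<bar>x i\<bar> * u i"
        using vpos[rule_format, of i] phis[of i] by (simp add: abs_mult u_def s_def)
      then show "(if i \<in> {i. t (k - 1) < v i / w i \<and> v i / w i \<le> t k} then ennreal \<bar>x i * (v i / \<phi> (v i / w i))\<bar> else 0)
        = (if bl i = k then h i else 0)"
        using blM[of k i] by (simp add: h_def s_def)
    qed
    then show ?thesis by (simp add: lp_lq_blocks_weighted_norm_def B_def[abs_def])
  qed
  define K where "K m = Kfun (lq_weighted_norm q v) (lq_weighted_norm q w) (t m) x" for m
  define L where "L m = K m / ennreal (\<phi> (t m))" for m
  have LHS: "interp_norm (lq_weighted_norm q v) (lq_weighted_norm q w) \<phi> t p x = lnorm p L"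
    by (simp add: interp_norm_def L_def[abs_def] K_def[abs_def])
  have gen: "B k \<le> ennreal 8 * L m"
    if c: "\<And>i. 0 \<le> c i" "\<And>i. c i \<le> v i" "\<And>i. c i \<le> t m * w i"
      and hb: "\<And>i. bl i = k \<Longrightarrow> \<bar>x i\<bar> * u i \<le> 2 / \<phi> (t m) * (\<bar>x i\<bar> * c i)" for c m k
  proof -
    have "B k \<le> lnorm q (\<lambda>i. ennreal (2 / \<phi> (t m)) * ennreal (\<bar>x i\<bar> * c i))"
      unfolding B_def
    proof (rule N_mono)
      fix i
      show "(if bl i = k then h i else 0) \<le> ennreal (2 / \<phi> (t m)) * ennreal (\<bar>x i\<bar> * c i)"
      proof (cases "bl i = k")
        case True
        have "h i \<le> ennreal (2 / \<phi> (t m) * (\<bar>x i\<bar> * c i))"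
          unfolding h_def using hb[OF True] by (rule ennreal_leI)
        also have "\<dots> = ennreal (2 / \<phi> (t m)) * ennreal (\<bar>x i\<bar> * c i)"
          using phitpos'[of m] c(1)[of i] by (intro ennreal_mult) auto
        finally show ?thesis using True by simp
      qed simp
    qed
    also have "\<dots> = ennreal (2 / \<phi> (t m)) * lnorm q (\<lambda>i. ennreal (\<bar>x i\<bar> * c i))" by (rule N_homog[OF q])
    also have "\<dots> \<le> ennreal (2 / \<phi> (t m)) * (4 * K m)"
      unfolding K_def
      by (rule mult_left_mono[OF Klow[OF q]]) (use c tpos'[of m] wpos in \<open>auto intro: less_imp_le\<close>)
    also have "\<dots> = ennreal 8 * L m"
    proof -
      have e: "ennreal (2 / \<phi> (t m)) = 2 * ennreal (inverse (\<phi> (t m)))"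
        using phitpos'[of m] by (simp add: ennreal_mult divide_inverse)
      have "L m = K m * ennreal (inverse (\<phi> (t m)))"
        using phitpos'[of m] by (simp add: L_def divide_ennreal_def inverse_ennreal)
      then show ?thesis unfolding e using enn_alg by simp
    qed
    finally show ?thesis .
  qed
  have Bk: "B k \<le> ennreal 8 * max (L k) (L (k - 1))" for k
  proof -
    have Z: "\<phi> (t k) \<le> 2 * \<phi> (t (k - 1)) \<or> \<phi> (t (k - 1)) / t (k - 1) \<le> 2 * (\<phi> (t k) / t k)"
      using Zcase'[of "k - 1"] by simp
    then show ?thesis
    proof
      assume Z1: "\<phi> (t k) \<le> 2 * \<phi> (t (k - 1))"
      have "B k \<le> ennreal 8 * L k"
      proof (rule gen[where c = "\<lambda>i. if bl i = k then v i else 0"])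
        fix i
        show "0 \<le> (if bl i = k then v i else 0)" using vpos by (simp add: less_imp_le)
        show "(if bl i = k then v i else 0) \<le> v i" using vpos by (simp add: less_imp_le)
        show "(if bl i = k then v i else 0) \<le> t k * w i"
        proof (cases "bl i = k")
          case True
          then have "s i \<le> t k" using blM by blast
          then show ?thesis using True wpos[rule_format, of i] by (simp add: s_def pos_divide_le_eq)
        next
          case False then show ?thesis using tpos'[of k] wpos[rule_format, of i] by simp
        qed
      next
        fix i assume bi: "bl i = k"
        then have st: "t (k - 1) < s i" using blM by blast
        have "\<phi> (t (k - 1)) \<le> \<phi> (s i)" using st tpos'[of "k - 1"] by (intro phimono') auto
        then have "\<phi> (t k) \<le> 2 * \<phi> (s i)" using Z1 by linarith
        then show "\<bar>x i\<bar> * u i \<le> 2 / \<phi> (t k) * (\<bar>x i\<bar> * (if bl i = k then v i else 0))"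
          using r_Z1[of "\<phi> (t k)" "\<phi> (s i)" "v i" "\<bar>x i\<bar>"] bi phitpos'[of k] phis[of i] vpos
          by (simp add: u_def)
      qed
      then show ?thesis by (meson max.cobounded1 mult_left_mono order_trans zero_le)
    next
      assume Z2: "\<phi> (t (k - 1)) / t (k - 1) \<le> 2 * (\<phi> (t k) / t k)"
      have "B k \<le> ennreal 8 * L (k - 1)"
      proof (rule gen[where c = "\<lambda>i. if bl i = k then t (k - 1) * w i else 0"])
        fix i
        show "0 \<le> (if bl i = k then t (k - 1) * w i else 0)"
          using wpos[rule_format, of i] tpos'[of "k - 1"] by simp
        show "(if bl i = k then t (k - 1) * w i else 0) \<le> t (k - 1) * w i"
          using wpos[rule_format, of i] tpos'[of "k - 1"] by simp
        show "(if bl i = k then t (k - 1) * w i else 0) \<le> v i"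
        proof (cases "bl i = k")
          case True
          then have "t (k - 1) < s i" using blM by blast
          then show ?thesis using True wpos[rule_format, of i] by (simp add: s_def pos_less_divide_eq)
        next
          case False then show ?thesis using vpos[rule_format, of i] by simp
        qed
      next
        fix i assume bi: "bl i = k"
        then have st: "s i \<le> t k" using blM by blast
        have "\<phi> (t k) / t k \<le> \<phi> (s i) / s i" using st spos[of i] by (intro psimono') auto
        then have "\<phi> (t (k - 1)) / t (k - 1) \<le> 2 * (\<phi> (s i) / s i)" using Z2 by linarith
        then show "\<bar>x i\<bar> * u i \<le> 2 / \<phi> (t (k - 1)) * (\<bar>x i\<bar> * (if bl i = k then t (k - 1) * w i else 0))"
          using r_Z2[of "w i" "s i" "\<phi> (s i)" "\<phi> (t (k - 1))" "t (k - 1)" "\<bar>x i\<bar>"] bi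
            wpos[rule_format, of i] spos[of i] phis[of i] phitpos'[of "k - 1"] tpos'[of "k - 1"]
          by (simp add: u_def vws[of i])
      qed
      then show ?thesis by (meson max.cobounded2 mult_left_mono order_trans zero_le)
    qed
  qed
  have "lnorm p B \<le> lnorm p (\<lambda>k. ennreal 8 * max (L k) (L (k - 1)))" by (rule N_mono) (rule Bk)
  also have "\<dots> = ennreal 8 * lnorm p (\<lambda>k. max (L k) (L (k - 1)))" by (rule N_homog[OF p])
  also have "\<dots> \<le> ennreal 8 * (2 * max (lnorm p L) (lnorm p (\<lambda>k. L (k - 1))))"
    by (rule mult_left_mono[OF N_max[OF p]]) simp
  also have "lnorm p (\<lambda>k. L (k - 1)) = lnorm p L"
    using N_shift[of p L "-1"] by simp
  also have "ennreal 8 * (2 * max (lnorm p L) (lnorm p L)) \<le> ennreal 256 * lnorm p L"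
  proof -
    have "ennreal 8 * (2 * max (lnorm p L) (lnorm p L)) = ennreal 16 * lnorm p L" by simp
    also have "\<dots> \<le> ennreal 256 * lnorm p L" by (rule mult_right_mono) auto
    finally show ?thesis .
  qed
  finally show ?thesis using RHS LHS by simp
qed

end

theorem lemma3p3:
  fixes p q :: ennreal and v w :: "int \<Rightarrow> real" and \<phi> :: "real \<Rightarrow> real" and t :: "int \<Rightarrow> real"
  assumes "1 \<le> p" and "1 \<le> q"
    and "\<forall>i. v i > 0" and "\<forall>i. w i > 0"
    and "nondeg_quasi_concave \<phi>"
    and "discretizing_sequence \<phi> t"
  shows "equiv_spaces
           (interp_norm (lq_weighted_norm q v) (lq_weighted_norm q w) \<phi> t p)
           (lp_lq_blocks_weighted_norm p q (\<lambda>k. {i. t (k - 1) < v i / w i \<and> v i / w i \<le> t k})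
              (\<lambda>i. v i / \<phi> (v i / w i)))"
  proof -
  have "\<forall>x. interp_norm (lq_weighted_norm q v) (lq_weighted_norm q w) \<phi> t p x
        \<le> ennreal 256 * lp_lq_blocks_weighted_norm p q (\<lambda>k. {i. t (k - 1) < v i / w i \<and> v i / w i \<le> t k})
              (\<lambda>i. v i / \<phi> (v i / w i)) x
      \<and> lp_lq_blocks_weighted_norm p q (\<lambda>k. {i. t (k - 1) < v i / w i \<and> v i / w i \<le> t k})
              (\<lambda>i. v i / \<phi> (v i / w i)) x
        \<le> ennreal 256 * interp_norm (lq_weighted_norm q v) (lq_weighted_norm q w) \<phi> t p x"
    using dir2[OF assms(5) assms(6) assms(1) assms(2) assms(3) assms(4)]
      dir1[OF assms(5) assms(6) assms(1) assms(2) assms(3) assms(4)] by blast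
  then show ?thesis unfolding equiv_spaces_def by (intro exI[of _ 256]) auto
qed

end
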